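(* Let $K$ be a tropical aura and $R$ a positive aura with tempered growth. Then the lexicographic product $K[\times]R$ has tempered growth.
   Context: A halo is a commutative unital semiring with a partial order compatible with $+$ and $\cdot$; an aura is a halo whose semiring is a semifield; positive means $0<1$. A halo is tropical if it is not $\{0\}$, totally ordered, and $a+b=\max(a,b)$. For positive auras $R_1,R_2$, the lexicographic product $R_1[\times]R_2$ is $\{0\}\cup(R_1^\times\times R_2^\times)$ (with $0=(0,0)$, $R_i^\times=R_i\setminus\{0\}$), with componentwise operations and the lexicographic order (first coordinate most significant). A halo $R$ has tempered growth if for every non-zero $P\in\mathbb{N}[X]$ and $x\in R$, ($x^n\le P(n)$ for all $n\in\mathbb{N}$) implies $x\le1$, natural numbers being interpreted as sums of $1$. *)

theory Defs
  imports "HOL-Computational_Algebra.Polynomial"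
begin

record 'a halo_str =
  hcarrier :: "'a set"
  hzero :: 'a
  hone :: 'a
  hadd :: "'a \<Rightarrow> 'a \<Rightarrow> 'a"
  hmul :: "'a \<Rightarrow> 'a \<Rightarrow> 'a"
  hle :: "'a \<Rightarrow> 'a \<Rightarrow> bool"

definition halo :: "'a halo_str \<Rightarrow> bool" where
  "halo R \<longleftrightarrow>
     hzero R \<in> hcarrier R \<and> hone R \<in> hcarrier R \<and>
     (\<forall>a\<in>hcarrier R. \<forall>b\<in>hcarrier R. hadd R a b \<in> hcarrier R \<and> hmul R a b \<in> hcarrier R) \<and>
     (\<forall>a\<in>hcarrier R. \<forall>b\<in>hcarrier R. \<forall>c\<in>hcarrier R.
        hadd R (hadd R a b) c = hadd R a (hadd R b c) \<and>
        hmul R (hmul R a b) c = hmul R a (hmul R b c) \<and>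
        hmul R a (hadd R b c) = hadd R (hmul R a b) (hmul R a c)) \<and>
     (\<forall>a\<in>hcarrier R. \<forall>b\<in>hcarrier R. hadd R a b = hadd R b a \<and> hmul R a b = hmul R b a) \<and>
     (\<forall>a\<in>hcarrier R. hadd R (hzero R) a = a \<and> hmul R (hone R) a = a \<and> hmul R (hzero R) a = hzero R) \<and>
     (\<forall>a\<in>hcarrier R. hle R a a) \<and>
     (\<forall>a\<in>hcarrier R. \<forall>b\<in>hcarrier R. hle R a b \<and> hle R b a \<longrightarrow> a = b) \<and>
     (\<forall>a\<in>hcarrier R. \<forall>b\<in>hcarrier R. \<forall>c\<in>hcarrier R. hle R a b \<and> hle R b c \<longrightarrow> hle R a c) \<and>
     (\<forall>a\<in>hcarrier R. \<forall>b\<in>hcarrier R. \<forall>c\<in>hcarrier R. hle R a b \<longrightarrow>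
        hle R (hadd R a c) (hadd R b c) \<and> hle R (hmul R a c) (hmul R b c))"

definition hless :: "'a halo_str \<Rightarrow> 'a \<Rightarrow> 'a \<Rightarrow> bool" where
  "hless R a b \<longleftrightarrow> hle R a b \<and> a \<noteq> b"

definition aura :: "'a halo_str \<Rightarrow> bool" where
  "aura R \<longleftrightarrow> halo R \<and> hzero R \<noteq> hone R \<and>
     (\<forall>a\<in>hcarrier R. a \<noteq> hzero R \<longrightarrow> (\<exists>b\<in>hcarrier R. hmul R a b = hone R))"

definition positive :: "'a halo_str \<Rightarrow> bool" where
  "positive R \<longleftrightarrow> hless R (hzero R) (hone R)"

definition tropical :: "'a halo_str \<Rightarrow> bool" where
  "tropical R \<longleftrightarrow> halo R \<and> hcarrier R \<noteq> {hzero R} \<and>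
     (\<forall>a\<in>hcarrier R. \<forall>b\<in>hcarrier R. hle R a b \<or> hle R b a) \<and>
     (\<forall>a\<in>hcarrier R. \<forall>b\<in>hcarrier R. hadd R a b = (if hle R a b then b else a))"

definition lex_prod :: "'a halo_str \<Rightarrow> 'b halo_str \<Rightarrow> ('a \<times> 'b) halo_str" where
  "lex_prod R1 R2 =
     \<lparr> hcarrier = {(hzero R1, hzero R2)} \<union>
                  ((hcarrier R1 - {hzero R1}) \<times> (hcarrier R2 - {hzero R2})),
       hzero = (hzero R1, hzero R2),
       hone = (hone R1, hone R2),
       hadd = (\<lambda>(a, b) (c, d). (hadd R1 a c, hadd R2 b d)),
       hmul = (\<lambda>(a, b) (c, d). (hmul R1 a c, hmul R2 b d)),
       hle = (\<lambda>(a, b) (c, d). hless R1 a c \<or> (a = c \<and> hle R2 b d)) \<rparr>"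

definition hnat :: "'a halo_str \<Rightarrow> nat \<Rightarrow> 'a" where
  "hnat R k = (hadd R (hone R) ^^ k) (hzero R)"

definition hpow :: "'a halo_str \<Rightarrow> 'a \<Rightarrow> nat \<Rightarrow> 'a" where
  "hpow R x n = (hmul R x ^^ n) (hone R)"

definition tempered_growth :: "'a halo_str \<Rightarrow> bool" where
  "tempered_growth R \<longleftrightarrow>
     (\<forall>P :: nat poly. \<forall>x\<in>hcarrier R. P \<noteq> 0 \<longrightarrow>
        (\<forall>n::nat. hle R (hpow R x n) (hnat R (poly P n))) \<longrightarrow> hle R x (hone R))"

end

theory Submission
  imports Defs
begin

lemma halo_facts:
  assumes "halo K"
  shows "hzero K \<in> hcarrier K" "hone K \<in> hcarrier K"
    "\<And>a b. a \<in> hcarrier K \<Longrightarrow> b \<in> hcarrier K \<Longrightarrow> hadd K a b = hadd K b a"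
    "\<And>a b. a \<in> hcarrier K \<Longrightarrow> b \<in> hcarrier K \<Longrightarrow> hmul K a b = hmul K b a"
    "\<And>a. a \<in> hcarrier K \<Longrightarrow> hadd K (hzero K) a = a"
    "\<And>a. a \<in> hcarrier K \<Longrightarrow> hmul K (hone K) a = a"
    "\<And>a. a \<in> hcarrier K \<Longrightarrow> hle K a a"
    "\<And>a b. a \<in> hcarrier K \<Longrightarrow> b \<in> hcarrier K \<Longrightarrow> hle K a b \<Longrightarrow> hle K b a \<Longrightarrow> a = b"
proof -
  have c: "\<forall>a\<in>hcarrier K. \<forall>b\<in>hcarrier K. hadd K a b = hadd K b a \<and> hmul K a b = hmul K b a"
   and u: "\<forall>a\<in>hcarrier K. hadd K (hzero K) a = a \<and> hmul K (hone K) a = a \<and> hmul K (hzero K) a = hzero K"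
   and r: "\<forall>a\<in>hcarrier K. hle K a a"
   and s: "\<forall>a\<in>hcarrier K. \<forall>b\<in>hcarrier K. hle K a b \<and> hle K b a \<longrightarrow> a = b"
   and z: "hzero K \<in> hcarrier K" and o: "hone K \<in> hcarrier K"
    by (insert assms, unfold halo_def, elim conjE, assumption)+
  show "hzero K \<in> hcarrier K" "hone K \<in> hcarrier K" by (fact z, fact o)
  show "\<And>a b. a \<in> hcarrier K \<Longrightarrow> b \<in> hcarrier K \<Longrightarrow> hadd K a b = hadd K b a"
    using c by blast
  show "\<And>a b. a \<in> hcarrier K \<Longrightarrow> b \<in> hcarrier K \<Longrightarrow> hmul K a b = hmul K b a"
    using c by blast
  show "\<And>a. a \<in> hcarrier K \<Longrightarrow> hadd K (hzero K) a = a" using u by blast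
  show "\<And>a. a \<in> hcarrier K \<Longrightarrow> hmul K (hone K) a = a" using u by blast
  show "\<And>a. a \<in> hcarrier K \<Longrightarrow> hle K a a" using r by blast
  show "\<And>a b. a \<in> hcarrier K \<Longrightarrow> b \<in> hcarrier K \<Longrightarrow> hle K a b \<Longrightarrow> hle K b a \<Longrightarrow> a = b"
    using s by blast
qed

lemma lex_hnat: "hnat (lex_prod K R) k = (hnat K k, hnat R k)"
  by (induction k) (auto simp: hnat_def lex_prod_def)

lemma lex_hpow: "hpow (lex_prod K R) (a, b) n = (hpow K a n, hpow R b n)"
  by (induction n) (auto simp: hpow_def lex_prod_def)

lemma trop_hnat:
  assumes "tropical K"
  shows "hnat K m = hzero K \<or> hnat K m = hone K"
proof (induction m)
  case 0 then show ?case by (simp add: hnat_def)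
next
  case (Suc m)
  have H: "halo K" and T: "\<forall>a\<in>hcarrier K. \<forall>b\<in>hcarrier K. hadd K a b = (if hle K a b then b else a)"
    using assms by (auto simp: tropical_def)
  have z: "hzero K \<in> hcarrier K" and o: "hone K \<in> hcarrier K" using H by (auto simp: halo_facts[OF H])
  have e: "hnat K (Suc m) = hadd K (hone K) (hnat K m)" by (simp add: hnat_def)
  from Suc show ?case
  proof
    assume "hnat K m = hzero K"
    then have "hnat K (Suc m) = hadd K (hone K) (hzero K)" using e by simp
    also have "\<dots> = hadd K (hzero K) (hone K)" using H z o by (simp add: halo_facts[OF H])
    also have "\<dots> = hone K" by (rule halo_facts(5)[OF H o])
    finally show ?thesis by simp
  next
    assume "hnat K m = hone K"
    then have "hnat K (Suc m) = hadd K (hone K) (hone K)" using e by simp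
    also have "\<dots> = hone K" using T o by simp
    finally show ?thesis by simp
  qed
qed

lemma trop_zero_le:
  assumes "tropical K" "a \<in> hcarrier K"
  shows "hle K (hzero K) a"
proof -
  have H: "halo K" and T: "\<forall>a\<in>hcarrier K. \<forall>b\<in>hcarrier K. hadd K a b = (if hle K a b then b else a)"
    using assms by (auto simp: tropical_def)
  have z: "hzero K \<in> hcarrier K" using H by (auto simp: halo_facts[OF H])
  have "hadd K (hzero K) a = a" by (rule halo_facts(5)[OF H assms(2)])
  then have "(if hle K (hzero K) a then a else hzero K) = a" using T z assms(2) by simp
  then show ?thesis using H z by (auto simp: halo_facts[OF H] split: if_splits)
qed

theorem lemma1p34:
  fixes K :: "'a halo_str" and R :: "'b halo_str"
  assumes "aura K" and "tropical K"
    and "aura R" and "positive R" and "tempered_growth R"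
  shows "tempered_growth (lex_prod K R)"
  unfolding tempered_growth_def
proof (intro allI ballI impI)
  fix P :: "nat poly" and x
  assume x: "x \<in> hcarrier (lex_prod K R)" and P: "P \<noteq> 0"
    and A: "\<forall>n. hle (lex_prod K R) (hpow (lex_prod K R) x n) (hnat (lex_prod K R) (poly P n))"
  have H: "halo K" using assms(2) by (simp add: tropical_def)
  have HR: "halo R" using assms(3) by (simp add: aura_def)
  have z: "hzero K \<in> hcarrier K" and o: "hone K \<in> hcarrier K" using H by (auto simp: halo_facts[OF H])
  have oR: "hone R \<in> hcarrier R" using halo_facts[OF HR] by auto
  have zo: "hzero K \<noteq> hone K" using assms(1) by (simp add: aura_def)
  have le01: "hle K (hzero K) (hone K)" using trop_zero_le[OF assms(2) o] .
  have n10: "\<not> hle K (hone K) (hzero K)" using halo_facts(8)[OF H o z] le01 zo by metis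
  obtain a b where xab: "x = (a, b)" by force
  show "hle (lex_prod K R) x (hone (lex_prod K R))"
  proof (cases "x = hzero (lex_prod K R)")
    case True
    then show ?thesis using le01 zo by (auto simp: lex_prod_def hless_def)
  next
    case False
    then have a: "a \<in> hcarrier K" "a \<noteq> hzero K" and b: "b \<in> hcarrier R"
      using x xab by (auto simp: lex_prod_def)
    have a0: "hle K (hzero K) a" using trop_zero_le[OF assms(2) a(1)] .
    have A': "\<And>n. hless K (hpow K a n) (hnat K (poly P n)) \<or>
        (hpow K a n = hnat K (poly P n) \<and> hle R (hpow R b n) (hnat R (poly P n)))"
      using A unfolding xab lex_hpow lex_hnat by (simp add: lex_prod_def)
    have pa1: "hpow K a 1 = a" using halo_facts(4,6)[OF H] a(1) o by (simp add: hpow_def)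
    have c1: "hless K a (hnat K (poly P 1)) \<or> a = hnat K (poly P 1)"
      using A'[of 1] pa1 by auto
    have "hnat K (poly P 1) \<noteq> hzero K"
    proof
      assume "hnat K (poly P 1) = hzero K"
      with c1 have "hle K a (hzero K)" using a(2) by (auto simp: hless_def)
      with a0 a show False using halo_facts(8)[OF H a(1) z] by blast
    qed
    then have "hnat K (poly P 1) = hone K" using trop_hnat[OF assms(2)] by blast
    with c1 have "hless K a (hone K) \<or> a = hone K" by simp
    then show ?thesis
    proof
      assume "hless K a (hone K)"
      then show ?thesis by (simp add: xab lex_prod_def)
    next
      assume a1: "a = hone K"
      have pw: "hpow K (hone K) n = hone K" for n
        by (induction n) (simp_all add: hpow_def halo_facts(6)[OF H o])
      have "hle R (hpow R b n) (hnat R (poly P n))" for n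
      proof -
        have nl: "\<not> hless K (hone K) (hnat K (poly P n))"
          using trop_hnat[OF assms(2), of "poly P n"] n10 by (auto simp: hless_def)
        show ?thesis using A'[of n] nl pw a1 by auto
      qed
      then have "hle R b (hone R)" using assms(5) P b unfolding tempered_growth_def by blast
      then show ?thesis using a1 by (simp add: xab lex_prod_def)
    qed
  qed
qed

end
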